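(* For $n>3$ let $P_{2n}(x)=x^{2n}+x^{n+3}+x^{n+1}+x^{n-1}+x^{n-3}+1$. Let $\alpha$ be the unique real root of $4x^3-2x=1$, namely $$\alpha=\frac{\sqrt[3]{\frac{\sqrt{57}}{288}+\frac{23}{864}}+\frac16}{\sqrt[3]{\frac{\sqrt{57}}{72}+\frac18}}\approx 0.885.$$ Then $\lim_{n\to\infty}C(P_{2n})=\frac{2}{\pi}\arccos(\alpha)\approx 0.308799876$.
   Context: For a polynomial $P$ of degree $d$, let $I(P)$ and $E(P)$ denote the numbers of complex zeros of $P$ (counted with multiplicity) of modulus $<1$ and $>1$ respectively, and $C(P)=\frac{I(P)+E(P)}{d}$. *)

theory Defs
  imports "HOL-Analysis.Analysis" "HOL-Computational_Algebra.Polynomial"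
begin

definition I_count :: "complex poly \<Rightarrow> nat" where
  "I_count p = (\<Sum>z\<in>{z. poly p z = 0 \<and> norm z < 1}. order z p)"

definition E_count :: "complex poly \<Rightarrow> nat" where
  "E_count p = (\<Sum>z\<in>{z. poly p z = 0 \<and> norm z > 1}. order z p)"

definition C_ratio :: "complex poly \<Rightarrow> real" where
  "C_ratio p = real (I_count p + E_count p) / real (degree p)"

definition P2n :: "nat \<Rightarrow> complex poly" where
  "P2n n = monom 1 (2*n) + monom 1 (n+3) + monom 1 (n+1) + monom 1 (n-1)
           + monom 1 (n-3) + 1"

end

theory Submission
  imports Defs "HOL-Computational_Algebra.Fundamental_Theorem_Algebra"
begin

definition Fn :: "nat \<Rightarrow> real \<Rightarrow> real" where
  "Fn n t = cos (real n * t) + cos (3*t) + cos t"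
definition S1 :: "nat \<Rightarrow> real \<Rightarrow> real" where
  "S1 n t = real n * sin (real n * t) + 3 * sin (3*t) + sin t"
definition C2 :: "nat \<Rightarrow> real \<Rightarrow> real" where
  "C2 n t = (real n)^2 * cos (real n * t) + 9 * cos (3*t) + cos t"

lemma poly_P2n: "n \<ge> 4 \<Longrightarrow> poly (P2n n) z = z^(2*n) + z^(n+3) + z^(n+1) + z^(n-1) + z^(n-3) + 1"
  by (simp add: P2n_def poly_monom)

lemma pderiv_P2n: "pderiv (P2n n) = pderiv (monom 1 (2*n)) + pderiv (monom 1 (n+3)) + pderiv (monom 1 (n+1))
   + pderiv (monom 1 (n-1)) + pderiv (monom 1 (n-3))"
  by (simp add: P2n_def pderiv_add)

lemma d1_monom: "z * poly (pderiv (monom (1::complex) k)) z = of_nat k * z^k"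
  by (cases k) (auto simp: pderiv_monom poly_monom)

lemma d2_monom: "z^2 * poly (pderiv (pderiv (monom (1::complex) k))) z = of_nat k * (of_nat k - 1) * z^k"
proof (cases "k \<ge> 2")
  case True
  then obtain m where k: "k = Suc (Suc m)" by (metis add_2_eq_Suc le_iff_add)
  show ?thesis by (simp add: k pderiv_monom poly_monom power2_eq_square algebra_simps)
next
  case False
  then have "k = 0 \<or> k = 1" by auto
  then show ?thesis by (auto simp: pderiv_monom)
qed

lemma cis_plus_minus: "cis x + cis (-x) = 2 * complex_of_real (cos x)"
  by (simp add: complex_eq_iff cis.sel)

lemma cis_minus_minus: "cis x - cis (-x) = 2 * \<i> * complex_of_real (sin x)"
  by (simp add: complex_eq_iff cis.sel)

lemma cis_pow_split: "(cis t)^k = cis (real n * t) * cis ((real k - real n) * t)"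
proof -
  have "real n * t + (real k - real n) * t = real k * t" by (simp add: algebra_simps)
  then show ?thesis by (simp add: Complex.DeMoivre cis_mult)
qed

lemma P_cis:
  assumes "n \<ge> 4"
  shows "poly (P2n n) (cis t) = 2 * cis (real n * t) * complex_of_real (Fn n t)"
proof -
  have r1: "real (n-1) - real n = -1" "real (n-3) - real n = -3" "real (2*n) - real n = real n"
     "real (n+3) - real n = 3" "real (n+1) - real n = 1" using assms by auto
  have c0: "(1::complex) = cis (real n * t) * cis (-(real n * t))" by (simp add: cis_mult)
  have "poly (P2n n) (cis t) = cis (real n * t) * ((cis (real n * t) + cis (-(real n * t)))
      + (cis (3*t) + cis (-(3*t))) + (cis t + cis (-t)))"
    unfolding poly_P2n[OF assms]
    apply (subst c0)
    apply (simp only: cis_pow_split[of t _ n] r1)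
    apply (simp add: algebra_simps)
    done
  then show ?thesis by (simp add: cis_plus_minus Fn_def algebra_simps)
qed


lemma pderiv2_P2n: "pderiv (pderiv (P2n n)) = pderiv (pderiv (monom 1 (2*n))) + pderiv (pderiv (monom 1 (n+3))) + pderiv (pderiv (monom 1 (n+1)))
   + pderiv (pderiv (monom 1 (n-1))) + pderiv (pderiv (monom 1 (n-3)))"
  by (simp add: pderiv_P2n pderiv_add)

lemma P1_cis:
  assumes "n \<ge> 4"
  shows "cis t * poly (pderiv (P2n n)) (cis t) = 2 * cis (real n * t) * (of_real (real n * Fn n t) + \<i> * of_real (S1 n t))"
proof -
  have r1: "real (n-1) - real n = -1" "real (n-3) - real n = -3" "real (2*n) - real n = real n"
     "real (n+3) - real n = 3" "real (n+1) - real n = 1" using assms by auto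
  have r2: "of_nat (n-1) = (of_nat n - 1 :: complex)" "of_nat (n-3) = (of_nat n - 3 :: complex)" using assms by (auto simp: of_nat_diff)
  have "cis t * poly (pderiv (P2n n)) (cis t) = of_nat (2*n) * cis t ^ (2*n) + of_nat (n+3) * cis t ^ (n+3)
     + of_nat (n+1) * cis t ^ (n+1) + of_nat (n-1) * cis t ^ (n-1) + of_nat (n-3) * cis t ^ (n-3)"
    unfolding pderiv_P2n poly_add distrib_left d1_monom ..
  also have "\<dots> = cis (real n * t) * (2 * of_nat n * cis (real n * t) + (of_nat n + 3) * cis (3*t)
     + (of_nat n + 1) * cis t + (of_nat n - 1) * cis (-t) + (of_nat n - 3) * cis (-(3*t)))"
    apply (simp only: cis_pow_split[of t _ n] r1 r2)
    apply (simp add: algebra_simps)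
    done
  also have "\<dots> = 2 * cis (real n * t) * (of_real (real n * Fn n t) + \<i> * of_real (S1 n t))"
    by (simp add: complex_eq_iff cis.sel Fn_def S1_def algebra_simps)
  finally show ?thesis .
qed

lemma P2_cis:
  assumes "n \<ge> 6"
  shows "(cis t)^2 * poly (pderiv (pderiv (P2n n))) (cis t) = 2 * cis (real n * t) *
     (of_real (real n * (real n - 1) * Fn n t) + \<i> * of_real ((2 * real n - 1) * S1 n t) + of_real (C2 n t))"
proof -
  have r1: "real (n-1) - real n = -1" "real (n-3) - real n = -3" "real (2*n) - real n = real n"
     "real (n+3) - real n = 3" "real (n+1) - real n = 1" using assms by auto
  have r2: "of_nat (n-1) = (of_nat n - 1 :: complex)" "of_nat (n-3) = (of_nat n - 3 :: complex)" using assms by (auto simp: of_nat_diff)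
  have "(cis t)^2 * poly (pderiv (pderiv (P2n n))) (cis t) = of_nat (2*n) * (of_nat (2*n) - 1) * cis t ^ (2*n) + of_nat (n+3) * (of_nat (n+3) - 1) * cis t ^ (n+3)
     + of_nat (n+1) * (of_nat (n+1) - 1) * cis t ^ (n+1) + of_nat (n-1) * (of_nat (n-1) - 1) * cis t ^ (n-1) + of_nat (n-3) * (of_nat (n-3) - 1) * cis t ^ (n-3)"
    unfolding pderiv2_P2n poly_add distrib_left d2_monom ..
  also have "\<dots> = cis (real n * t) * (2 * of_nat n * (2 * of_nat n - 1) * cis (real n * t) + (of_nat n + 3) * (of_nat n + 2) * cis (3*t)
     + (of_nat n + 1) * of_nat n * cis t + (of_nat n - 1) * (of_nat n - 2) * cis (-t) + (of_nat n - 3) * (of_nat n - 4) * cis (-(3*t)))"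
    apply (simp only: cis_pow_split[of t _ n] r1 r2)
    apply (simp add: algebra_simps)
    done
  also have "\<dots> = 2 * cis (real n * t) *
     (of_real (real n * (real n - 1) * Fn n t) + \<i> * of_real ((2 * real n - 1) * S1 n t) + of_real (C2 n t))"
    by (simp add: complex_eq_iff cis.sel Fn_def S1_def C2_def algebra_simps power2_eq_square)
  finally show ?thesis .
qed


lemma P2n_split: "P2n n = monom 1 (2*n) + (monom 1 (n+3) + monom 1 (n+1) + monom 1 (n-1) + monom 1 (n-3) + 1)"
  by (simp add: P2n_def add.assoc)

lemma degree_P2n: assumes "n \<ge> 4" shows "degree (P2n n) = 2*n"
proof -
  let ?Q = "monom (1::complex) (n+3) + monom 1 (n+1) + monom 1 (n-1) + monom 1 (n-3) + 1"
  have "degree ?Q \<le> n+3"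
    by (intro degree_add_le degree_monom_le[THEN order.trans]) (use assms in auto)
  then have "degree ?Q < degree (monom (1::complex) (2*n))" using assms by (simp add: degree_monom_eq)
  then show ?thesis unfolding P2n_split by (simp add: degree_add_eq_left degree_monom_eq)
qed

lemma P2n_nz: "n \<ge> 4 \<Longrightarrow> P2n n \<noteq> 0"
  using degree_P2n[of n] by auto

lemma order_le1:
  fixes p :: "complex poly"
  assumes "p \<noteq> 0" "poly p z = 0" "poly (pderiv p) z \<noteq> 0"
  shows "order z p = 1"
proof -
  have "pderiv p \<noteq> 0" using assms(3) by auto
  then have "order z (pderiv p) = 0" using assms(3) order_root by blast
  then show ?thesis using order_pderiv[OF assms(1,2)] by simp
qed

lemma order_le2:
  fixes p :: "complex poly"
  assumes "p \<noteq> 0" "poly p z = 0" "poly (pderiv p) z = 0" "poly (pderiv (pderiv p)) z \<noteq> 0"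
  shows "order z p = 2"
proof -
  have "pderiv p \<noteq> 0" using assms(4) by auto
  then have "order z (pderiv p) = 1" using order_le1 assms by blast
  then show ?thesis using order_pderiv[OF assms(1,2)] by simp
qed

lemma order_pos:
  fixes p :: "complex poly"
  assumes "p \<noteq> 0" "poly p z = 0"
  shows "order z p \<ge> 1"
  using assms order_root by (metis less_one not_le)

lemma sum_orders:
  fixes p :: "complex poly"
  assumes "p \<noteq> 0"
  shows "(\<Sum>z\<in>{z. poly p z = 0}. order z p) = degree p"
proof -
  have "degree p = size (proots p)" by (simp add: size_proots_complex)
  also have "\<dots> = sum (count (proots p)) (set_mset (proots p))" by (simp add: size_multiset_overloaded_eq)
  also have "\<dots> = (\<Sum>z\<in>{z. poly p z = 0}. order z p)" using assms by simp
  finally show ?thesis by simp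
qed

definition Ucount :: "nat \<Rightarrow> nat" where
  "Ucount n = (\<Sum>z\<in>{z. poly (P2n n) z = 0 \<and> norm z = 1}. order z (P2n n))"

lemma C_ratio_U:
  assumes "n \<ge> 4"
  shows "C_ratio (P2n n) = 1 - real (Ucount n) / (2 * real n)"
proof -
  let ?P = "P2n n"
  have nz: "?P \<noteq> 0" using P2n_nz assms by auto
  have fin: "finite {z. poly ?P z = 0}" using poly_roots_finite[OF nz] .
  let ?A = "{z. poly ?P z = 0 \<and> norm z < 1}" and ?B = "{z. poly ?P z = 0 \<and> norm z > 1}"
    and ?Z = "{z. poly ?P z = 0 \<and> norm z = 1}"
  have eq: "{z. poly ?P z = 0} = (?A \<union> ?B) \<union> ?Z" by auto
  have "(\<Sum>z\<in>{z. poly ?P z = 0}. order z ?P) = (\<Sum>z\<in>?A \<union> ?B. order z ?P) + (\<Sum>z\<in>?Z. order z ?P)"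
    unfolding eq by (rule sum.union_disjoint) (use fin in \<open>auto intro: finite_subset\<close>)
  also have "(\<Sum>z\<in>?A \<union> ?B. order z ?P) = (\<Sum>z\<in>?A. order z ?P) + (\<Sum>z\<in>?B. order z ?P)"
    by (rule sum.union_disjoint) (use fin in \<open>auto intro: finite_subset\<close>)
  finally have "I_count ?P + E_count ?P + Ucount n = 2 * n"
    using sum_orders[OF nz] degree_P2n[OF assms] by (simp add: I_count_def E_count_def Ucount_def)
  then have "real (I_count ?P + E_count ?P) = 2 * real n - real (Ucount n)" by linarith
  then show ?thesis using assms by (simp add: C_ratio_def degree_P2n field_simps)
qed


lemma Fn_even: "Fn n (-t) = Fn n t" by (simp add: Fn_def)
lemma S1_odd: "S1 n (-t) = - S1 n t" by (simp add: S1_def)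
lemma C2_even: "C2 n (-t) = C2 n t" by (simp add: C2_def)

lemma Fn_0: "Fn n 0 \<noteq> 0" by (simp add: Fn_def)
lemma Fn_pi: "Fn n pi \<noteq> 0"
proof -
  have "cos (3*pi) = -1" using cos_npi[of 3] by simp
  then have "Fn n pi = (-1)^n - 2" by (simp add: Fn_def)
  moreover have "((-1::real)^n) \<le> 1" by (cases "even n") auto
  ultimately show ?thesis by linarith
qed

lemma root_iff: "n \<ge> 4 \<Longrightarrow> poly (P2n n) (cis t) = 0 \<longleftrightarrow> Fn n t = 0"
  by (simp add: P_cis)

lemma Arg_cis: "-pi < t \<Longrightarrow> t \<le> pi \<Longrightarrow> Arg (cis t) = t"
  by (rule Arg_unique[of 1]) (auto simp: cis_conv_exp)

lemma sq_bound_S1: "S1 n t = 0 \<Longrightarrow> (real n * sin (real n * t))^2 \<le> 16"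
proof -
  assume h: "S1 n t = 0"
  have "real n * sin (real n * t) = - (3 * sin (3*t) + sin t)" using h by (simp add: S1_def)
  moreover have "\<bar>3 * sin (3*t) + sin t\<bar> \<le> 4"
    using abs_sin_le_one[of "3*t"] abs_sin_le_one[of t] by linarith
  ultimately have "\<bar>real n * sin (real n * t)\<bar> \<le> 4" by simp
  then show ?thesis using abs_le_square_iff[of "real n * sin (real n * t)" 4] by simp
qed

lemma sq_bound_C2: "C2 n t = 0 \<Longrightarrow> ((real n)^2 * cos (real n * t))^2 \<le> 100"
proof -
  assume h: "C2 n t = 0"
  have "(real n)^2 * cos (real n * t) = - (9 * cos (3*t) + cos t)" using h by (simp add: C2_def)
  moreover have "\<bar>9 * cos (3*t) + cos t\<bar> \<le> 10"
    using abs_cos_le_one[of "3*t"] abs_cos_le_one[of t] by linarith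
  ultimately have "\<bar>(real n)^2 * cos (real n * t)\<bar> \<le> 10" by simp
  then show ?thesis using abs_le_square_iff[of "(real n)^2 * cos (real n * t)" 10] by simp
qed

lemma S1_C2_not_both: assumes "n \<ge> 6" "S1 n t = 0" shows "C2 n t \<noteq> 0"
proof
  assume c: "C2 n t = 0"
  define N where "N = real n"
  define s where "s = sin (real n * t)"
  define c' where "c' = cos (real n * t)"
  have N6: "N \<ge> 6" using assms N_def by simp
  have h1: "N^2 * s^2 \<le> 16" using sq_bound_S1[OF assms(2)] by (simp add: N_def s_def power_mult_distrib)
  have h2: "N^4 * c'^2 \<le> 100" using sq_bound_C2[OF c] by (simp add: N_def c'_def power_mult_distrib flip: power_mult)
  have "36 * s^2 \<le> N^2 * s^2"
  proof (intro mult_right_mono)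
    have "(6::real)^2 \<le> N^2" using N6 by (intro power_mono) auto
    then show "36 \<le> N^2" by simp
  qed simp
  moreover have "1296 * c'^2 \<le> N^4 * c'^2"
  proof (intro mult_right_mono)
    have "(6::real)^4 \<le> N^4" using N6 by (intro power_mono) auto
    then show "1296 \<le> N^4" by simp
  qed simp
  moreover have "s^2 + c'^2 = 1" by (simp add: s_def c'_def)
  ultimately show False using h1 h2 by linarith
qed

definition Sset :: "nat \<Rightarrow> real set" where
  "Sset n = {t. 0 < t \<and> t < pi \<and> Fn n t = 0}"

definition wt :: "nat \<Rightarrow> real \<Rightarrow> nat" where
  "wt n t = (if S1 n t = 0 then 2 else 1)"

lemma Zset_eq:
  assumes "n \<ge> 4"
  shows "{z. poly (P2n n) z = 0 \<and> norm z = 1} = cis ` (Sset n \<union> uminus ` Sset n)"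
proof (intro equalityI subsetI)
  fix z assume z: "z \<in> {z. poly (P2n n) z = 0 \<and> norm z = 1}"
  define a where "a = Arg z"
  have za: "z = cis a" using z complex_norm_eq_1_exp_eq[of z] by (simp add: a_def cis_conv_exp)
  have a1: "-pi < a" "a \<le> pi" using mpi_less_Arg Arg_le_pi a_def by auto
  have Fa: "Fn n a = 0" using z za root_iff[OF assms] by auto
  have "a \<noteq> 0" "a \<noteq> pi" using Fa Fn_0 Fn_pi by auto
  then consider "0 < a \<and> a < pi" | "0 < -a \<and> -a < pi" using a1 by linarith
  then show "z \<in> cis ` (Sset n \<union> uminus ` Sset n)"
  proof cases
    case 1 then show ?thesis using Fa za by (auto simp: Sset_def)
  next
    case 2
    then have "-a \<in> Sset n" using Fa Fn_even[of n a] by (simp add: Sset_def)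
    then show ?thesis using za by (metis UnI2 image_eqI minus_minus)
  qed
next
  fix z assume "z \<in> cis ` (Sset n \<union> uminus ` Sset n)"
  then obtain t where t: "z = cis t" "Fn n t = 0" by (auto simp: Sset_def Fn_even)
  then show "z \<in> {z. poly (P2n n) z = 0 \<and> norm z = 1}" using root_iff[OF assms] by auto
qed

lemma inj_cis: "inj_on cis (Sset n \<union> uminus ` Sset n)"
proof (rule inj_onI)
  fix x y assume "x \<in> Sset n \<union> uminus ` Sset n" "y \<in> Sset n \<union> uminus ` Sset n" "cis x = cis y"
  then have "-pi < x" "x \<le> pi" "-pi < y" "y \<le> pi" "Arg (cis x) = Arg (cis y)" by (auto simp: Sset_def)
  then show "x = y" using Arg_cis by metis
qed

lemma finite_Sset: assumes "n \<ge> 4" shows "finite (Sset n)"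
proof -
  have "finite {z. poly (P2n n) z = 0}" using poly_roots_finite P2n_nz assms by blast
  then have "finite (cis ` (Sset n \<union> uminus ` Sset n))" using Zset_eq[OF assms] by (metis (no_types, lifting) finite_subset mem_Collect_eq subsetI)
  then have "finite (Sset n \<union> uminus ` Sset n)" using finite_imageD inj_cis by blast
  then show ?thesis by simp
qed

lemma Ucount_eq:
  assumes "n \<ge> 4"
  shows "Ucount n = (\<Sum>t\<in>Sset n. order (cis t) (P2n n) + order (cis (-t)) (P2n n))"
proof -
  have fin: "finite (Sset n)" using finite_Sset assms .
  have disj: "Sset n \<inter> uminus ` Sset n = {}" by (auto simp: Sset_def)
  have "Ucount n = (\<Sum>t\<in>Sset n \<union> uminus ` Sset n. order (cis t) (P2n n))"
    unfolding Ucount_def Zset_eq[OF assms] by (rule sum.reindex[OF inj_cis, unfolded comp_def])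
  also have "\<dots> = (\<Sum>t\<in>Sset n. order (cis t) (P2n n)) + (\<Sum>t\<in>uminus ` Sset n. order (cis t) (P2n n))"
    by (rule sum.union_disjoint) (use fin disj in auto)
  also have "(\<Sum>t\<in>uminus ` Sset n. order (cis t) (P2n n)) = (\<Sum>t\<in>Sset n. order (cis (-t)) (P2n n))"
    by (subst sum.reindex) (auto simp: inj_on_def)
  finally show ?thesis by (simp add: sum.distrib)
qed

lemma order_bounds:
  assumes "n \<ge> 6" "Fn n t = 0"
  shows "1 \<le> order (cis t) (P2n n)" "order (cis t) (P2n n) \<le> wt n t"
proof -
  have n4: "n \<ge> 4" using assms by simp
  have nz: "P2n n \<noteq> 0" using P2n_nz n4 .
  have r: "poly (P2n n) (cis t) = 0" using root_iff[OF n4] assms by simp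
  show "1 \<le> order (cis t) (P2n n)" using order_pos[OF nz r] .
  have cz: "cis t \<noteq> 0" "cis (real n * t) \<noteq> 0" by auto
  show "order (cis t) (P2n n) \<le> wt n t"
  proof (cases "S1 n t = 0")
    case False
    have "cis t * poly (pderiv (P2n n)) (cis t) \<noteq> 0"
      unfolding P1_cis[OF n4] using False assms(2) cz by simp
    then have "poly (pderiv (P2n n)) (cis t) \<noteq> 0" by auto
    then show ?thesis using order_le1[OF nz r] False by (simp add: wt_def)
  next
    case True
    have c2: "C2 n t \<noteq> 0" using S1_C2_not_both assms(1) True by blast
    have "cis t * poly (pderiv (P2n n)) (cis t) = 0"
      unfolding P1_cis[OF n4] using True assms(2) by simp
    then have d1: "poly (pderiv (P2n n)) (cis t) = 0" using cz by simp
    have "(cis t)^2 * poly (pderiv (pderiv (P2n n))) (cis t) \<noteq> 0"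
      unfolding P2_cis[OF assms(1)] using True assms(2) c2 cz by simp
    then have "poly (pderiv (pderiv (P2n n))) (cis t) \<noteq> 0" by auto
    then show ?thesis using order_le2[OF nz r d1] True by (simp add: wt_def)
  qed
qed

lemma U_bounds:
  assumes "n \<ge> 6"
  shows "2 * card (Sset n) \<le> Ucount n" "Ucount n \<le> 2 * (\<Sum>t\<in>Sset n. wt n t)"
proof -
  have n4: "n \<ge> 4" using assms by simp
  have "2 * card (Sset n) = (\<Sum>t\<in>Sset n. 2)" by simp
  also have "\<dots> \<le> (\<Sum>t\<in>Sset n. order (cis t) (P2n n) + order (cis (-t)) (P2n n))"
  proof (rule sum_mono)
    fix t assume "t \<in> Sset n"
    then have "Fn n t = 0" "Fn n (-t) = 0" by (auto simp: Sset_def Fn_even)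
    then show "2 \<le> order (cis t) (P2n n) + order (cis (-t)) (P2n n)"
      using order_bounds(1)[OF assms] by (metis add_mono one_add_one)
  qed
  finally show "2 * card (Sset n) \<le> Ucount n" using Ucount_eq[OF n4] by simp
  have "Ucount n \<le> (\<Sum>t\<in>Sset n. 2 * wt n t)"
    unfolding Ucount_eq[OF n4]
  proof (rule sum_mono)
    fix t assume "t \<in> Sset n"
    then have "Fn n t = 0" "Fn n (-t) = 0" by (auto simp: Sset_def Fn_even)
    moreover have "wt n (-t) = wt n t" by (simp add: wt_def S1_odd)
    ultimately show "order (cis t) (P2n n) + order (cis (-t)) (P2n n) \<le> 2 * wt n t"
      using order_bounds(2)[OF assms] by (metis mult_2 add_mono)
  qed
  then show "Ucount n \<le> 2 * (\<Sum>t\<in>Sset n. wt n t)" by (simp add: sum_distrib_left)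
qed



lemma cubic_id: "4*c^3 - 2*c - 1 = (c - a) * ((2*c + a)^2 + 3*a^2 - 2) + (4*a^3 - 2*a - (1::real))"
  by (simp add: algebra_simps power2_eq_square power3_eq_cube)

lemma alpha_facts:
  fixes \<alpha> :: real
  assumes a: "4 * \<alpha>^3 - 2 * \<alpha> = 1"
  shows "0.85 < \<alpha>" "\<alpha> < 1" "3 * \<alpha>^2 - 2 > 0"
proof -
  show h: "0.85 < \<alpha>"
  proof (rule ccontr)
    assume "\<not> 0.85 < \<alpha>"
    then have le: "\<alpha> \<le> 0.85" by simp
    have q0: "3 * 0.85^2 - 2 > (0::real)" by (simp add: power2_eq_square)
    have q: "(2*\<alpha> + 0.85)^2 + 3 * 0.85^2 - 2 > (0::real)" using zero_le_power2[of "2*\<alpha> + 0.85"] q0 by linarith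
    have "4 * \<alpha>^3 - 2 * \<alpha> - 1 = (\<alpha> - 0.85) * ((2*\<alpha> + 0.85)^2 + 3 * 0.85^2 - 2) + (4 * 0.85^3 - 2*0.85 - 1)"
      by (rule cubic_id)
    also have "\<dots> < 0"
    proof -
      have "(\<alpha> - 0.85) * ((2*\<alpha> + 0.85)^2 + 3 * 0.85^2 - 2) \<le> 0"
        using le q by (intro mult_nonpos_nonneg) auto
      moreover have "4*(0.85::real)^3 - 2*0.85 - 1 < 0" by (simp add: power3_eq_cube)
      ultimately show ?thesis by linarith
    qed
    finally show False using a by simp
  qed
  show "\<alpha> < 1"
  proof (rule ccontr)
    assume "\<not> \<alpha> < 1"
    then have "\<alpha> \<ge> 1" by simp
    then have "\<alpha>^2 \<ge> 1" by (simp add: one_le_power)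
    then have "\<alpha> * \<alpha>^2 \<ge> \<alpha> * 1" using \<open>\<alpha> \<ge> 1\<close> by (intro mult_left_mono) auto
    then have "\<alpha>^3 \<ge> \<alpha>" by (simp add: power3_eq_cube power2_eq_square)
    then show False using a \<open>\<alpha> \<ge> 1\<close> by linarith
  qed
  have h': "17/20 < \<alpha>" using h by simp
  have "\<alpha>^2 > (17/20)^2" using h' by (intro power_strict_mono) auto
  moreover have "(17/20::real)^2 = 289/400" by (simp add: power2_eq_square)
  ultimately show "3 * \<alpha>^2 - 2 > 0" by linarith
qed

definition g :: "real \<Rightarrow> real" where "g t = cos (3*t) + cos t"

lemma g_cos: "g t = 4 * (cos t)^3 - 2 * cos t"
  by (simp add: g_def cos_treble_cos)

lemma Fn_g: "Fn n t = cos (real n * t) + g t" by (simp add: Fn_def g_def)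

lemma h_factor:
  fixes \<alpha> c :: real
  assumes a: "4 * \<alpha>^3 - 2 * \<alpha> = 1"
  shows "4*c^3 - 2*c - 1 = (c - \<alpha>) * ((2*c + \<alpha>)^2 + 3*\<alpha>^2 - 2)"
proof -
  have "(c - \<alpha>) * ((2*c + \<alpha>)^2 + 3*\<alpha>^2 - 2) = 4*c^3 - 2*c - (4 * \<alpha>^3 - 2 * \<alpha>)"
    by (simp add: algebra_simps power2_eq_square power3_eq_cube)
  then show ?thesis using a by simp
qed

lemma h_upper:
  fixes \<alpha> c c1 :: real
  assumes a: "4 * \<alpha>^3 - 2 * \<alpha> = 1" and c: "c \<le> c1" "c1 \<le> \<alpha>"
  shows "4*c^3 - 2*c \<le> 1 - (\<alpha> - c1) * (3*\<alpha>^2 - 2)"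
proof -
  have q0: "3*\<alpha>^2 - 2 > 0" using alpha_facts[OF a] by simp
  have "(\<alpha> - c1) * (3*\<alpha>^2 - 2) \<le> (\<alpha> - c) * ((2*c + \<alpha>)^2 + 3*\<alpha>^2 - 2)"
    using c q0 by (intro mult_mono) auto
  then show ?thesis using h_factor[OF a, of c] by (simp add: algebra_simps)
qed

lemma h_lower:
  fixes \<alpha> c c1 :: real
  assumes a: "4 * \<alpha>^3 - 2 * \<alpha> = 1" and c: "-c1 \<le> c" "c1 \<le> \<alpha>"
  shows "4*c^3 - 2*c \<ge> -1 + (\<alpha> - c1) * (3*\<alpha>^2 - 2)"
  using h_upper[OF a, of "-c" c1] c by (simp add: power3_eq_cube)

lemma h_strict:
  fixes \<alpha> c :: real
  assumes a: "4 * \<alpha>^3 - 2 * \<alpha> = 1"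
  shows "c < \<alpha> \<Longrightarrow> 4*c^3 - 2*c < 1" "c > \<alpha> \<Longrightarrow> 4*c^3 - 2*c > 1"
    "c > -\<alpha> \<Longrightarrow> 4*c^3 - 2*c > -1" "c < -\<alpha> \<Longrightarrow> 4*c^3 - 2*c < -1"
proof -
  have q: "\<And>c. (2*c + \<alpha>)^2 + 3*\<alpha>^2 - 2 > 0" using alpha_facts(3)[OF a] zero_le_power2 by (metis add_nonneg_pos add_diff_eq)
  have m: "\<And>c. 4*c^3 - 2*c - 1 = (c - \<alpha>) * ((2*c + \<alpha>)^2 + 3*\<alpha>^2 - 2)" using h_factor[OF a] by blast
  have neg: "\<And>c::real. (-c)^3 = - (c^3)" by (simp add: power3_eq_cube)
  show "c < \<alpha> \<Longrightarrow> 4*c^3 - 2*c < 1"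
  proof -
    assume "c < \<alpha>" then have "(c - \<alpha>) * ((2*c + \<alpha>)^2 + 3*\<alpha>^2 - 2) < 0" using q[of c] by (intro mult_neg_pos) auto
    then show ?thesis using m[of c] by linarith
  qed
  show "c > \<alpha> \<Longrightarrow> 4*c^3 - 2*c > 1"
  proof -
    assume "c > \<alpha>" then have "(c - \<alpha>) * ((2*c + \<alpha>)^2 + 3*\<alpha>^2 - 2) > 0" using q[of c] by (intro mult_pos_pos) auto
    then show ?thesis using m[of c] by linarith
  qed
  show "c > -\<alpha> \<Longrightarrow> 4*c^3 - 2*c > -1"
  proof -
    assume "c > -\<alpha>" then have "(-c - \<alpha>) * ((2*(-c) + \<alpha>)^2 + 3*\<alpha>^2 - 2) < 0" using q[of "-c"] by (intro mult_neg_pos) auto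
    then show ?thesis using m[of "-c"] neg[of c] by linarith
  qed
  show "c < -\<alpha> \<Longrightarrow> 4*c^3 - 2*c < -1"
  proof -
    assume "c < -\<alpha>" then have "(-c - \<alpha>) * ((2*(-c) + \<alpha>)^2 + 3*\<alpha>^2 - 2) > 0" using q[of "-c"] by (intro mult_pos_pos) auto
    then show ?thesis using m[of "-c"] neg[of c] by linarith
  qed
qed

lemma beta_facts:
  fixes \<alpha> :: real
  assumes a: "4 * \<alpha>^3 - 2 * \<alpha> = 1"
  shows "0 < arccos \<alpha>" "arccos \<alpha> < pi/2" "cos (arccos \<alpha>) = \<alpha>"
proof -
  have al: "0.85 < \<alpha>" "\<alpha> < 1" using alpha_facts[OF a] by auto
  show "0 < arccos \<alpha>" using arccos_lt_bounded[of \<alpha>] al by auto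
  show c: "cos (arccos \<alpha>) = \<alpha>" using al by simp
  show "arccos \<alpha> < pi/2"
  proof (rule ccontr)
    assume "\<not> arccos \<alpha> < pi/2"
    then have "cos (arccos \<alpha>) \<le> cos (pi/2)" using arccos_bounded[of \<alpha>] al by (subst cos_mono_le_eq) auto
    then show False using c al by simp
  qed
qed

lemma region0:
  fixes \<alpha> :: real
  assumes a: "4 * \<alpha>^3 - 2 * \<alpha> = 1" and t: "0 < t" "t < pi" and F: "Fn n t = 0"
  shows "arccos \<alpha> \<le> t" "t \<le> pi - arccos \<alpha>"
proof -
  define \<beta> where "\<beta> = arccos \<alpha>"
  have b: "0 < \<beta>" "\<beta> < pi/2" "cos \<beta> = \<alpha>" using beta_facts[OF a] \<beta>_def by auto
  have gF: "g t = - cos (real n * t)" using F by (simp add: Fn_g)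
  then have ga: "\<bar>g t\<bar> \<le> 1" by simp
  show "\<beta> \<le> t"
  proof (rule ccontr)
    assume "\<not> \<beta> \<le> t"
    then have "cos t > cos \<beta>" using t b by (subst cos_mono_less_eq) auto
    then have "g t > 1" using h_strict(2)[OF a, of "cos t"] b by (simp add: g_cos)
    then show False using ga by simp
  qed
  show "t \<le> pi - \<beta>"
  proof (rule ccontr)
    assume "\<not> t \<le> pi - \<beta>"
    then have "cos t < cos (pi - \<beta>)" using t b by (subst cos_mono_less_eq) auto
    then have "g t < -1" using h_strict(4)[OF a, of "cos t"] b by (simp add: g_cos)
    then show False using ga by simp
  qed
qed

lemma region1:
  fixes \<alpha> :: real
  assumes a: "4 * \<alpha>^3 - 2 * \<alpha> = 1" and t: "arccos \<alpha> < t" "t < pi - arccos \<alpha>"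
  shows "\<bar>g t\<bar> < 1"
proof -
  define \<beta> where "\<beta> = arccos \<alpha>"
  have b: "0 < \<beta>" "\<beta> < pi/2" "cos \<beta> = \<alpha>" using beta_facts[OF a] \<beta>_def by auto
  have "cos t < cos \<beta>" using t b \<beta>_def by (subst cos_mono_less_eq) auto
  moreover have "cos t > cos (pi - \<beta>)" using t b \<beta>_def by (subst cos_mono_less_eq) auto
  ultimately show ?thesis using h_strict(1,3)[OF a, of "cos t"] b by (simp add: g_cos abs_less_iff)
qed

lemma region2:
  fixes \<alpha> :: real
  assumes a: "4 * \<alpha>^3 - 2 * \<alpha> = 1" and e: "0 < \<epsilon>" "\<epsilon> \<le> pi/4"
    and t: "arccos \<alpha> + \<epsilon> \<le> t" "t \<le> pi - arccos \<alpha> - \<epsilon>"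
  shows "\<bar>g t\<bar> \<le> 1 - (\<alpha> - cos (arccos \<alpha> + \<epsilon>)) * (3*\<alpha>^2 - 2)"
proof -
  define \<beta> where "\<beta> = arccos \<alpha>"
  have b: "0 < \<beta>" "\<beta> < pi/2" "cos \<beta> = \<alpha>" using beta_facts[OF a] \<beta>_def by auto
  define c1 where "c1 = cos (\<beta> + \<epsilon>)"
  have c1a: "c1 \<le> \<alpha>" unfolding c1_def using b e by (subst b(3)[symmetric], subst cos_mono_le_eq) auto
  have "cos t \<le> c1" unfolding c1_def using t b e \<beta>_def by (subst cos_mono_le_eq) auto
  moreover have "cos t \<ge> cos (pi - (\<beta> + \<epsilon>))" using t b e \<beta>_def by (subst cos_mono_le_eq) auto
  then have "cos t \<ge> - c1" by (simp add: c1_def)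
  ultimately show ?thesis using h_upper[OF a, of "cos t" c1] h_lower[OF a, of c1 "cos t"] c1a
    by (simp add: g_cos abs_le_iff c1_def \<beta>_def)
qed

lemma delta_pos:
  fixes \<alpha> :: real
  assumes a: "4 * \<alpha>^3 - 2 * \<alpha> = 1" and e: "0 < \<epsilon>" "\<epsilon> \<le> pi/4"
  shows "(\<alpha> - cos (arccos \<alpha> + \<epsilon>)) * (3*\<alpha>^2 - 2) > 0"
proof -
  define \<beta> where "\<beta> = arccos \<alpha>"
  have b: "0 < \<beta>" "\<beta> < pi/2" "cos \<beta> = \<alpha>" using beta_facts[OF a] \<beta>_def by auto
  have "cos (\<beta> + \<epsilon>) < cos \<beta>" using b e by (subst cos_mono_less_eq) auto
  then show ?thesis using alpha_facts(3)[OF a] b \<beta>_def by simp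
qed


lemma DERIV_Fn: "DERIV (Fn n) x :> - S1 n x"
  unfolding Fn_def S1_def by (auto intro!: derivative_eq_intros simp: algebra_simps)

lemma DERIV_S1: "DERIV (S1 n) x :> C2 n x"
  unfolding C2_def S1_def by (auto intro!: derivative_eq_intros simp: algebra_simps power2_eq_square)

lemma rolle_F:
  assumes "a < b" "Fn n a = 0" "Fn n b = 0"
  shows "\<exists>x. a < x \<and> x < b \<and> S1 n x = 0"
proof -
  obtain z where "a < z" "z < b" "Fn n b - Fn n a = (b - a) * (- S1 n z)"
    using MVT2[OF assms(1), of "Fn n" "\<lambda>x. - S1 n x"] DERIV_Fn by blast
  then show ?thesis using assms by auto
qed

lemma rolle_S1:
  assumes "a < b" "S1 n a = 0" "S1 n b = 0"
  shows "\<exists>x. a < x \<and> x < b \<and> C2 n x = 0"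
proof -
  obtain z where "a < z" "z < b" "S1 n b - S1 n a = (b - a) * C2 n z"
    using MVT2[OF assms(1), of "S1 n" "C2 n"] DERIV_S1 by blast
  then show ?thesis using assms by auto
qed

lemma sin_shift_sq: "sin (x - real k * pi)^2 = sin x ^2"
proof -
  have "sin (x - real k * pi) = sin x * (-1)^k" by (simp add: sin_diff)
  then show ?thesis by (simp add: power_mult_distrib flip: power_mult)
qed

lemma cos_shift_sq: "cos (x - real k * pi)^2 = cos x ^2"
proof -
  have "cos (x - real k * pi) = cos x * (-1)^k" by (simp add: cos_diff)
  then show ?thesis by (simp add: power_mult_distrib flip: power_mult)
qed

lemma sin_between:
  assumes "0 \<le> x" "x < y" "y < z" "z \<le> pi"
  shows "sin y \<ge> min (sin x) (sin z)"
proof (cases "y \<le> pi/2")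
  case True
  then have "sin x \<le> sin y" using assms by (intro sin_monotone_2pi_le) auto
  then show ?thesis by simp
next
  case False
  then have "sin (pi - z) \<le> sin (pi - y)" using assms by (intro sin_monotone_2pi_le) auto
  then show ?thesis by simp
qed

lemma core_sep:
  assumes n: "n \<ge> 1" and nd: "(real n)^2 * \<delta> > 16"
    and th: "t1 < t2" "real k * pi \<le> real n * t1" "real n * t2 \<le> (real k + 1) * pi"
    and F: "Fn n t1 = 0" "Fn n t2 = 0"
    and s: "sin (real n * t1)^2 \<ge> \<delta>" "sin (real n * t2)^2 \<ge> \<delta>"
  shows False
proof -
  obtain x where x: "t1 < x" "x < t2" "S1 n x = 0" using rolle_F[OF th(1) F] by blast
  have np: "real n > 0" using n by simp
  define p1 where "p1 = real n * t1 - real k * pi"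
  define p2 where "p2 = real n * t2 - real k * pi"
  define px where "px = real n * x - real k * pi"
  have ord: "p1 < px" "px < p2" using x np by (auto simp: p1_def p2_def px_def)
  have rng: "0 \<le> p1" "p2 \<le> pi" using th by (auto simp: p1_def p2_def algebra_simps)
  have s1: "sin p1 \<ge> 0" "sin p2 \<ge> 0" using ord rng by (auto intro!: sin_ge_zero)
  have sq1: "sin p1 ^2 \<ge> \<delta>" "sin p2 ^2 \<ge> \<delta>" using s sin_shift_sq by (auto simp: p1_def p2_def)
  have "sin px \<ge> min (sin p1) (sin p2)" using sin_between[of p1 px p2] ord rng by simp
  then have "sin px ^2 \<ge> \<delta>"
  proof (cases "sin p1 \<le> sin p2")
    case True
    then have "sin p1 \<le> sin px" using \<open>sin px \<ge> _\<close> by simp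
    then have "sin p1 ^2 \<le> sin px ^2" using s1 by (intro power_mono) auto
    then show ?thesis using sq1 by linarith
  next
    case False
    then have "sin p2 \<le> sin px" using \<open>sin px \<ge> _\<close> by simp
    then have "sin p2 ^2 \<le> sin px ^2" using s1 by (intro power_mono) auto
    then show ?thesis using sq1 by linarith
  qed
  then have "sin (real n * x)^2 \<ge> \<delta>" using sin_shift_sq by (simp add: px_def)
  then have "(real n)^2 * \<delta> \<le> (real n)^2 * sin (real n * x)^2" by (intro mult_left_mono) auto
  moreover have "(real n * sin (real n * x))^2 \<le> 16" using sq_bound_S1[OF x(3)] .
  ultimately show False using nd by (simp add: power_mult_distrib)
qed

lemma band_sep:
  assumes n: "n \<ge> 6"
    and th: "t1 < t2" "t2 < t3" "t3 < t4" "real k * pi \<le> real n * t1" "real n * t4 \<le> (real k + 1) * pi"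
    and F: "Fn n t1 = 0" "Fn n t2 = 0" "Fn n t3 = 0" "Fn n t4 = 0"
  shows False
proof -
  obtain x1 where x1: "t1 < x1" "x1 < t2" "S1 n x1 = 0" using rolle_F[OF th(1) F(1,2)] by blast
  obtain x2 where x2: "t2 < x2" "x2 < t3" "S1 n x2 = 0" using rolle_F[OF th(2) F(2,3)] by blast
  obtain x3 where x3: "t3 < x3" "x3 < t4" "S1 n x3 = 0" using rolle_F[OF th(3) F(3,4)] by blast
  have np: "real n \<ge> 6" using n by simp
  define ph where "ph y = real n * y - real k * pi" for y
  have phmono: "\<And>a b. a < b \<Longrightarrow> ph a < ph b" using np by (auto simp: ph_def)
  have phlo: "\<And>y. t1 \<le> y \<Longrightarrow> 0 \<le> ph y"
  proof -
    fix y assume "t1 \<le> y" then have "real n * t1 \<le> real n * y" using np by (intro mult_left_mono) auto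
    then show "0 \<le> ph y" using th(4) by (simp add: ph_def)
  qed
  have phhi: "\<And>y. y \<le> t4 \<Longrightarrow> ph y \<le> pi"
  proof -
    fix y assume "y \<le> t4" then have "real n * y \<le> real n * t4" using np by (intro mult_left_mono) auto
    then show "ph y \<le> pi" using th(5) by (simp add: ph_def algebra_simps)
  qed
  have c2sq: "(real n)^2 * cos (ph x2)^2 \<ge> (real n)^2 - 16"
  proof -
    have "(real n * sin (real n * x2))^2 \<le> 16" using sq_bound_S1[OF x2(3)] .
    moreover have "sin (real n * x2)^2 + cos (real n * x2)^2 = 1" by simp
    moreover have "(real n)^2 * cos (real n * x2)^2 = (real n)^2 - (real n)^2 * sin (real n * x2)^2"
      by (simp add: cos_squared_eq algebra_simps)
    ultimately have "(real n)^2 * cos (real n * x2)^2 \<ge> (real n)^2 - 16"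
      by (simp add: power_mult_distrib)
    then show ?thesis using cos_shift_sq by (simp add: ph_def)
  qed
  have key: "\<exists>z. t1 < z \<and> z < t4 \<and> C2 n z = 0 \<and> cos (ph z)^2 \<ge> cos (ph x2)^2"
  proof (cases "cos (ph x2) \<ge> 0")
    case True
    obtain z where z: "x1 < z" "z < x2" "C2 n z = 0" using rolle_S1[of x1 x2 n] x1 x2 th by auto
    have "cos (ph x2) < cos (ph z)"
      using z x1 x2 th phmono[of z x2] phlo[of z] phhi[of x2] by (subst cos_mono_less_eq) auto
    then have "cos (ph x2)^2 \<le> cos (ph z)^2" using True by (intro power_mono) auto
    then show ?thesis using z x1 x2 th by (intro exI[of _ z]) auto
  next
    case False
    obtain z where z: "x2 < z" "z < x3" "C2 n z = 0" using rolle_S1[of x2 x3 n] x2 x3 th by auto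
    have "cos (ph z) < cos (ph x2)"
      using z x2 x3 th phmono[of x2 z] phlo[of x2] phhi[of z] by (subst cos_mono_less_eq) auto
    then have "(- cos (ph x2))^2 \<le> (- cos (ph z))^2" using False by (intro power_mono) auto
    then show ?thesis using z x2 x3 th by (intro exI[of _ z]) auto
  qed
  then obtain z where z: "C2 n z = 0" "cos (ph z)^2 \<ge> cos (ph x2)^2" by blast
  have "((real n)^2 * cos (real n * z))^2 \<le> 100" using sq_bound_C2[OF z(1)] .
  then have h100: "(real n)^2 * ((real n)^2 * cos (ph z)^2) \<le> 100"
    using cos_shift_sq[of "real n * z" k] by (simp add: ph_def power_mult_distrib)
  have "(real n)^2 * cos (ph x2)^2 \<le> (real n)^2 * cos (ph z)^2" using z(2) by (intro mult_left_mono) auto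
  then have "(real n)^2 - 16 \<le> (real n)^2 * cos (ph z)^2" using c2sq by linarith
  moreover have "(6::real)^2 \<le> (real n)^2" using np by (intro power_mono) auto
  then have "(real n)^2 \<ge> 36" by simp
  ultimately have "(real n)^2 * ((real n)^2 * cos (ph z)^2) \<ge> 36 * 20"
    by (intro mult_mono) auto
  then show False using h100 by simp
qed

lemma card_le1_of:
  fixes A :: "real set"
  assumes "finite A" "\<And>x y. x \<in> A \<Longrightarrow> y \<in> A \<Longrightarrow> x < y \<Longrightarrow> False"
  shows "card A \<le> 1"
proof -
  have "\<forall>x\<in>A. \<forall>y\<in>A. x = y" using assms(2) by (meson linorder_neqE_linordered_idom)
  then show ?thesis using card_le_Suc0_iff_eq[OF assms(1)] by simp
qed

lemma Min_less:
  fixes B :: "real set"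
  assumes "finite B" "x \<in> B - {Min B}"
  shows "Min B < x"
proof -
  have m: "Min B \<le> x" using assms Min_le[of B x] by auto
  have "x \<noteq> Min B" using assms by auto
  then show ?thesis using m by linarith
qed

lemma card_le3_of:
  fixes A :: "real set"
  assumes fin: "finite A" and no: "\<And>a b c d. a \<in> A \<Longrightarrow> b \<in> A \<Longrightarrow> c \<in> A \<Longrightarrow> d \<in> A \<Longrightarrow> a < b \<Longrightarrow> b < c \<Longrightarrow> c < d \<Longrightarrow> False"
  shows "card A \<le> 3"
proof (rule ccontr)
  assume "\<not> card A \<le> 3"
  then have c4: "card A \<ge> 4" by simp
  define a where "a = Min A"
  define A1 where "A1 = A - {a}"
  have ne: "A \<noteq> {}" using c4 by auto
  have aA: "a \<in> A" using Min_in[OF fin ne] a_def by simp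
  have cA1: "card A1 \<ge> 3" using c4 aA fin by (simp add: A1_def)
  have f1: "finite A1" using fin A1_def by simp
  define b where "b = Min A1"
  define A2 where "A2 = A1 - {b}"
  have ne1: "A1 \<noteq> {}" using cA1 by auto
  have bA: "b \<in> A1" using Min_in[OF f1 ne1] b_def by simp
  have cA2: "card A2 \<ge> 2" using cA1 bA f1 by (simp add: A2_def)
  have f2: "finite A2" using f1 A2_def by simp
  define c where "c = Min A2"
  define A3 where "A3 = A2 - {c}"
  have ne2: "A2 \<noteq> {}" using cA2 by auto
  have cA: "c \<in> A2" using Min_in[OF f2 ne2] c_def by simp
  have cA3: "card A3 \<ge> 1" using cA2 cA f2 by (simp add: A3_def)
  then obtain d where dA: "d \<in> A3" by (metis card.empty ex_in_conv not_one_le_zero)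
  have ab: "a < b" using Min_less[OF fin, of b] bA by (simp add: A1_def a_def)
  have bc: "b < c" using Min_less[OF f1, of c] cA by (simp add: A2_def b_def)
  have cd: "c < d" using Min_less[OF f2, of d] dA by (simp add: A3_def c_def)
  show False using no[of a b c d] aA bA cA dA ab bc cd by (auto simp: A1_def A2_def A3_def)
qed

lemma card_nat_interval:
  "real (card {k::nat. a \<le> real k \<and> real k \<le> b}) \<le> max 0 (b - a + 1)"
proof -
  let ?S = "{k::nat. a \<le> real k \<and> real k \<le> b}"
  have sub: "int ` ?S \<subseteq> {\<lceil>a\<rceil>..\<lfloor>b\<rfloor>}"
  proof
    fix x assume "x \<in> int ` ?S"
    then obtain k where k: "x = int k" "a \<le> real k" "real k \<le> b" by auto
    have "\<lceil>a\<rceil> \<le> int k" using k(2) by (simp add: ceiling_le_iff)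
    moreover have "int k \<le> \<lfloor>b\<rfloor>" using k(3) by (simp add: le_floor_iff)
    ultimately show "x \<in> {\<lceil>a\<rceil>..\<lfloor>b\<rfloor>}" using k by simp
  qed
  have "card ?S = card (int ` ?S)" by (simp add: card_image)
  also have "\<dots> \<le> card {\<lceil>a\<rceil>..\<lfloor>b\<rfloor>}" by (rule card_mono[OF _ sub]) simp
  also have "\<dots> = nat (\<lfloor>b\<rfloor> - \<lceil>a\<rceil> + 1)" by simp
  finally have "real (card ?S) \<le> real (nat (\<lfloor>b\<rfloor> - \<lceil>a\<rceil> + 1))" by simp
  also have "\<dots> = max 0 (real_of_int (\<lfloor>b\<rfloor> - \<lceil>a\<rceil> + 1))" by simp
  also have "\<dots> \<le> max 0 (b - a + 1)" using of_int_floor_le[of b] le_of_int_ceiling[of a]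
    by (intro max.mono) (auto, linarith)
  finally show ?thesis .
qed

lemma ivt_Fn:
  assumes "a < b" "Fn n a * Fn n b < 0"
  shows "\<exists>x. a < x \<and> x < b \<and> Fn n x = 0"
proof -
  have cont: "continuous_on {a..b} (Fn n)" unfolding Fn_def by (intro continuous_intros)
  have ne: "Fn n a \<noteq> 0" "Fn n b \<noteq> 0" using assms(2) by auto
  have "Fn n a < 0 \<and> Fn n b > 0 \<or> Fn n a > 0 \<and> Fn n b < 0" using assms(2) by (auto simp: mult_less_0_iff)
  then obtain x where "a \<le> x" "x \<le> b" "Fn n x = 0"
    using IVT'[of "Fn n" a 0 b] IVT2'[of "Fn n" b 0 a] cont assms(1) by force
  then show ?thesis using ne by (intro exI[of _ x]) (auto simp: order.order_iff_strict)
qed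



lemma cos_kpi: "cos (real n * (real k * pi / real n)) = (-1)^k" if "n > 0"
  using that by simp

lemma lower_count:
  fixes \<alpha> :: real
  assumes a: "4 * \<alpha>^3 - 2 * \<alpha> = 1" and n: "n \<ge> 4"
  shows "real (card (Sset n)) \<ge> real n * (pi - 2 * arccos \<alpha>) / pi - 2"
proof -
  define \<beta> where "\<beta> = arccos \<alpha>"
  have b: "0 < \<beta>" "\<beta> < pi/2" using beta_facts[OF a] \<beta>_def by auto
  have np: "real n > 0" using n by simp
  define x where "x = real n * (pi - 2 * \<beta>) / pi"
  define K0 where "K0 = nat \<lfloor>real n * \<beta> / pi\<rfloor> + 1"
  define M where "M = nat (\<lceil>x\<rceil> - 2)"
  define tt where "tt k = real k * pi / real n" for k :: nat
  have K0lo: "real K0 > real n * \<beta> / pi"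
  proof -
    have "real n * \<beta> / pi \<ge> 0" using b np by simp
    then show ?thesis unfolding K0_def by (simp add: of_nat_nat) linarith
  qed
  have K0hi: "real K0 \<le> real n * \<beta> / pi + 1"
  proof -
    have "real n * \<beta> / pi \<ge> 0" using b np by simp
    then show ?thesis unfolding K0_def by (simp add: of_nat_nat)
  qed
  have Mx: "real M \<ge> x - 2" unfolding M_def using le_of_int_ceiling[of x] by (simp add: of_nat_nat) linarith
  have Mx2: "M > 0 \<Longrightarrow> real M < x - 1" unfolding M_def using ceiling_correct[of x] by (simp add: of_nat_nat)
  have ttmono: "\<And>i j. i \<le> j \<Longrightarrow> tt i \<le> tt j" using np by (auto simp: tt_def divide_right_mono)
  have ttstrict: "\<And>i j. i < j \<Longrightarrow> tt i < tt j" using np by (auto simp: tt_def divide_strict_right_mono)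
  have root: "\<exists>r. tt (K0 + j) < r \<and> r < tt (K0 + j + 1) \<and> Fn n r = 0" if j: "j < M" for j
  proof -
    define k where "k = K0 + j"
    have "real k \<ge> real K0" by (simp add: k_def)
    then have "real k * pi > real n * \<beta>" using K0lo pi_gt_zero
      by (smt (verit, ccfv_SIG) mult_strict_right_mono divide_less_eq)
    then have lo: "tt k > \<beta>" using np by (simp add: tt_def field_simps)
    have "real (k + 1) \<le> real K0 + real M" using j by (simp add: k_def)
    also have "\<dots> < real n * \<beta> / pi + x" using K0hi Mx2 j by linarith
    also have "\<dots> = real n * (pi - \<beta>) / pi" by (simp add: x_def field_simps)
    finally have "real (k+1) * pi < real n * (pi - \<beta>)" using pi_gt_zero by (simp add: field_simps)
    then have hi: "tt (k+1) < pi - \<beta>" using np by (simp add: tt_def field_simps)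
    have lt: "tt k < tt (k+1)" by (rule ttstrict) simp
    have g1: "\<bar>g (tt k)\<bar> < 1" using region1[OF a, of "tt k"] lo hi lt \<beta>_def by auto
    have g2: "\<bar>g (tt (k+1))\<bar> < 1" using region1[OF a, of "tt (k+1)"] lo hi lt \<beta>_def by auto
    have F1: "Fn n (tt k) = (-1)^k + g (tt k)" using np by (simp add: Fn_g tt_def)
    have F2: "Fn n (tt (k+1)) = - ((-1)^k) + g (tt (k+1))" using np by (simp add: Fn_g tt_def del: of_nat_Suc)
    have "Fn n (tt k) * Fn n (tt (k+1)) < 0"
    proof (cases "even k")
      case True
      then show ?thesis using F1 F2 g1 g2 by (simp add: mult_pos_neg abs_less_iff)
    next
      case False
      then show ?thesis using F1 F2 g1 g2 by (simp add: mult_neg_pos abs_less_iff)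
    qed
    then show ?thesis using ivt_Fn[OF lt] by (simp add: k_def)
  qed
  define r where "r j = (SOME r. tt (K0 + j) < r \<and> r < tt (K0 + j + 1) \<and> Fn n r = 0)" for j
  have r: "tt (K0 + j) < r j \<and> r j < tt (K0 + j + 1) \<and> Fn n (r j) = 0" if "j < M" for j
    unfolding r_def using someI_ex[OF root[OF that]] .
  have rS: "r ` {..<M} \<subseteq> Sset n"
  proof
    fix y assume "y \<in> r ` {..<M}"
    then obtain j where j: "j < M" "y = r j" by auto
    have "tt (K0 + j) \<ge> 0" using np by (simp add: tt_def)
    moreover have "tt (K0 + j) > 0"
    proof -
      have "real K0 > 0" by (simp add: K0_def)
      then show ?thesis using np by (simp add: tt_def)
    qed
    moreover have "tt (K0 + j + 1) \<le> pi"
    proof -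
      have "real (K0 + j + 1) \<le> real K0 + real M" using j by simp
      also have "\<dots> < real n * \<beta> / pi + x" using K0hi Mx2 j by linarith
      also have "\<dots> = real n * (pi - \<beta>) / pi" by (simp add: x_def field_simps)
      also have "\<dots> \<le> real n" using np b pi_gt_zero by (simp add: field_simps)
      finally have "real (K0 + j + 1) * pi \<le> real n * pi" using pi_gt_zero by simp
      then show ?thesis using np by (simp add: tt_def field_simps)
    qed
    ultimately show "y \<in> Sset n" using r[OF j(1)] j by (auto simp: Sset_def)
  qed
  have inj: "inj_on r {..<M}"
  proof (rule linorder_inj_onI)
    fix i j assume ij: "i < j" "i \<in> {..<M}" "j \<in> {..<M}"
    have "r i < tt (K0 + i + 1)" using r ij by auto
    also have "\<dots> \<le> tt (K0 + j)" using ij by (intro ttmono) simp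
    also have "\<dots> < r j" using r ij by auto
    finally show "r i \<noteq> r j" by simp
  qed (auto simp: nat_le_linear)
  have "M = card (r ` {..<M})" using card_image[OF inj] by simp
  also have "\<dots> \<le> card (Sset n)" using card_mono[OF finite_Sset[OF n] rS] .
  finally have "real M \<le> real (card (Sset n))" by simp
  then show ?thesis using Mx unfolding x_def \<beta>_def by linarith
qed



lemma sum_split_J:
  fixes S :: "real set" and f :: "real \<Rightarrow> real" and n :: nat and J :: "nat \<Rightarrow> real set"
  assumes fin: "finite S" and nn: "\<And>t. f t \<ge> 0"
    and cover: "\<And>t. t \<in> S \<Longrightarrow> \<exists>k<n. t \<in> J k"
  shows "(\<Sum>t\<in>S. f t) \<le> (\<Sum>k<n. \<Sum>t\<in>S \<inter> J k. f t)"
proof -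
  have "(\<Sum>t\<in>S. f t) \<le> (\<Sum>t\<in>S. \<Sum>k<n. if t \<in> J k then f t else 0)"
  proof (rule sum_mono)
    fix t assume "t \<in> S"
    then obtain k where k: "k < n" "t \<in> J k" using cover by blast
    have "f t = (if t \<in> J k then f t else 0)" using k by simp
    also have "\<dots> \<le> (\<Sum>k<n. if t \<in> J k then f t else 0)"
      by (rule member_le_sum) (use k nn in auto)
    finally show "f t \<le> (\<Sum>k<n. if t \<in> J k then f t else 0)" .
  qed
  also have "\<dots> = (\<Sum>k<n. \<Sum>t\<in>S. if t \<in> J k then f t else 0)" by (rule sum.swap)
  also have "\<dots> = (\<Sum>k<n. \<Sum>t\<in>S \<inter> J k. f t)"
    by (rule sum.cong[OF refl], rule sum.inter_restrict[OF fin, symmetric])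
  finally show ?thesis .
qed

lemma finite_nat_interval: "finite {k::nat. a \<le> real k \<and> real k \<le> b}"
proof (rule finite_subset[of _ "{..nat \<lceil>b\<rceil>}"])
  show "{k::nat. a \<le> real k \<and> real k \<le> b} \<subseteq> {..nat \<lceil>b\<rceil>}"
  proof
    fix k assume "k \<in> {k::nat. a \<le> real k \<and> real k \<le> b}"
    then have "real k \<le> b" by simp
    then have "real k \<le> (of_int \<lceil>b\<rceil> :: real)" using le_of_int_ceiling[of b] by linarith
    then have "int k \<le> \<lceil>b\<rceil>" by (metis of_int_le_iff of_int_of_nat_eq)
    then show "k \<in> {..nat \<lceil>b\<rceil>}" by simp
  qed
qed simp

lemma upper_count:
  fixes \<alpha> \<epsilon> :: real
  assumes a: "4 * \<alpha>^3 - 2 * \<alpha> = 1" and e: "0 < \<epsilon>" "\<epsilon> \<le> pi/4" and n: "n \<ge> 6"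
    and nd: "(real n)^2 * min ((\<alpha> - cos (arccos \<alpha> + \<epsilon>)) * (3*\<alpha>^2 - 2)) 1 > 16"
  shows "(\<Sum>t\<in>Sset n. real (wt n t)) \<le> real n * (pi - 2 * arccos \<alpha>) / pi + 2 + 10 * (real n * \<epsilon> / pi + 2)"
proof -
  define \<beta> where "\<beta> = arccos \<alpha>"
  have b: "0 < \<beta>" "\<beta> < pi/2" using beta_facts[OF a] \<beta>_def by auto
  define \<delta>0 where "\<delta>0 = (\<alpha> - cos (arccos \<alpha> + \<epsilon>)) * (3*\<alpha>^2 - 2)"
  define \<delta> where "\<delta> = min \<delta>0 1"
  have d0: "\<delta>0 > 0" using delta_pos[OF a e] \<delta>0_def by simp
  have d: "0 < \<delta>" "\<delta> \<le> 1" "\<delta> \<le> \<delta>0" using d0 by (auto simp: \<delta>_def)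
  have nd': "(real n)^2 * \<delta> > 16" using nd by (simp add: \<delta>_def \<delta>0_def)
  have np: "real n > 0" using n by simp
  define S where "S = Sset n"
  have fin: "finite S" using finite_Sset n S_def by simp
  define J where "J k = {t. real k * pi \<le> real n * t \<and> real n * t \<le> (real k + 1) * pi}" for k :: nat
  define A where "A k = (\<beta> * real n \<le> (real k + 1) * pi \<and> real k * pi \<le> (pi - \<beta>) * real n)" for k :: nat
  define B where "B k = (A k \<and> (real k * pi < (\<beta> + \<epsilon>) * real n \<or> (real k + 1) * pi > (pi - \<beta> - \<epsilon>) * real n))" for k :: nat
  have Sprop: "\<And>t. t \<in> S \<Longrightarrow> 0 < t \<and> t < pi \<and> Fn n t = 0 \<and> \<beta> \<le> t \<and> t \<le> pi - \<beta>"
    using region0[OF a] by (auto simp: S_def Sset_def \<beta>_def)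
  have cover: "\<exists>k<n. t \<in> J k" if t: "t \<in> S" for t
  proof -
    have t0: "0 < t" "t < pi" using Sprop[OF t] by auto
    define k where "k = nat \<lfloor>real n * t / pi\<rfloor>"
    have pos: "real n * t / pi \<ge> 0" using t0 np by simp
    have k1: "real k \<le> real n * t / pi" using pos by (simp add: k_def of_nat_nat)
    have k2: "real n * t / pi < real k + 1" using pos by (simp add: k_def of_nat_nat)
    have "real n * t / pi < real n" using t0 np by (simp add: field_simps)
    then have "k < n" using k1 by linarith
    moreover have "t \<in> J k" using k1 k2 pi_gt_zero by (simp add: J_def field_simps)
    ultimately show ?thesis by blast
  qed
  have step1: "(\<Sum>t\<in>S. real (wt n t)) \<le> (\<Sum>k<n. \<Sum>t\<in>S \<inter> J k. real (wt n t))"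
    by (rule sum_split_J[OF fin _ cover]) simp
  have perk: "(\<Sum>t\<in>S \<inter> J k. real (wt n t)) \<le> (if A k then 1 else 0) + (if B k then 5 else 0)" for k
  proof -
    have finJ: "finite (S \<inter> J k)" using fin by simp
    have wt2: "\<And>t. real (wt n t) \<le> 2" by (simp add: wt_def)
    have inJ: "real k * pi \<le> real n * t" "real n * t \<le> (real k + 1) * pi" if "t \<in> J k" for t
      using that by (auto simp: J_def)
    show ?thesis
    proof (cases "A k")
      case False
      have "S \<inter> J k = {}"
      proof (rule ccontr)
        assume "S \<inter> J k \<noteq> {}"
        then obtain t where t: "t \<in> S" "t \<in> J k" by auto
        have "\<beta> * real n \<le> t * real n" using Sprop[OF t(1)] np by (intro mult_right_mono) auto
        then have "\<beta> * real n \<le> (real k + 1) * pi" using inJ[OF t(2)] by (simp add: mult.commute)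
        moreover have "t * real n \<le> (pi - \<beta>) * real n" using Sprop[OF t(1)] np by (intro mult_right_mono) auto
        then have "real k * pi \<le> (pi - \<beta>) * real n" using inJ[OF t(2)] by (simp add: mult.commute)
        ultimately show False using False by (simp add: A_def)
      qed
      then show ?thesis by simp
    next
      case True
      show ?thesis
      proof (cases "B k")
        case True
        have "card (S \<inter> J k) \<le> 3"
        proof (rule card_le3_of[OF finJ])
          fix t1 t2 t3 t4 assume h: "t1 \<in> S \<inter> J k" "t2 \<in> S \<inter> J k" "t3 \<in> S \<inter> J k" "t4 \<in> S \<inter> J k"
            "t1 < t2" "t2 < t3" "t3 < t4"
          show False using band_sep[OF n h(5,6,7)] inJ h Sprop by blast
        qed
        then have "(\<Sum>t\<in>S \<inter> J k. real (wt n t)) \<le> real (card (S \<inter> J k)) * 2"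
          using sum_bounded_above[of "S \<inter> J k" "\<lambda>t. real (wt n t)" 2] wt2 by simp
        also have "\<dots> \<le> 6" using \<open>card (S \<inter> J k) \<le> 3\<close> by simp
        finally show ?thesis using \<open>A k\<close> True by simp
      next
        case False
        have core: "sin (real n * t)^2 \<ge> \<delta>" and w1: "wt n t = 1" if t: "t \<in> S \<inter> J k" for t
        proof -
          have tS: "0 < t" "t < pi" "Fn n t = 0" using Sprop t by auto
          have "\<not> (real k * pi < (\<beta> + \<epsilon>) * real n)" using False \<open>A k\<close> by (simp add: B_def)
          moreover have tj: "real k * pi \<le> real n * t" "real n * t \<le> (real k + 1) * pi" using inJ t by auto
          ultimately have "real n * (\<beta> + \<epsilon>) \<le> real n * t" by (simp add: mult.commute)
          then have t1: "\<beta> + \<epsilon> \<le> t" using np by (simp add: mult_le_cancel_left_pos)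
          have "\<not> ((real k + 1) * pi > (pi - \<beta> - \<epsilon>) * real n)" using False \<open>A k\<close> by (simp add: B_def)
          then have "real n * t \<le> real n * (pi - \<beta> - \<epsilon>)" using tj by (simp add: mult.commute)
          then have t2: "t \<le> pi - \<beta> - \<epsilon>" using np by (simp add: mult_le_cancel_left_pos)
          have gb: "\<bar>g t\<bar> \<le> 1 - \<delta>" using region2[OF a e, of t] t1 t2 d by (simp add: \<beta>_def \<delta>0_def)
          have "cos (real n * t) = - g t" using tS by (simp add: Fn_g)
          then have "\<bar>cos (real n * t)\<bar> \<le> 1 - \<delta>" using gb by simp
          then have "cos (real n * t)^2 \<le> (1 - \<delta>)^2" using d by (metis abs_le_square_iff abs_of_nonneg diff_ge_0_iff_ge)
          moreover have "sin (real n * t)^2 = 1 - cos (real n * t)^2" by (simp add: sin_squared_eq)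
          moreover have "(1 - \<delta>)^2 \<le> 1 - \<delta>"
          proof -
            have "(1 - \<delta>) * (1 - \<delta>) \<le> 1 * (1 - \<delta>)" using d by (intro mult_right_mono) auto
            then show ?thesis by (simp add: power2_eq_square)
          qed
          ultimately show s: "sin (real n * t)^2 \<ge> \<delta>" by linarith
          show "wt n t = 1"
          proof (rule ccontr)
            assume "wt n t \<noteq> 1"
            then have "S1 n t = 0" by (simp add: wt_def split: if_splits)
            then have "(real n * sin (real n * t))^2 \<le> 16" by (rule sq_bound_S1)
            moreover have "(real n)^2 * \<delta> \<le> (real n)^2 * sin (real n * t)^2" using s by (intro mult_left_mono) auto
            ultimately show False using nd' by (simp add: power_mult_distrib)
          qed
        qed
        have "card (S \<inter> J k) \<le> 1"
        proof (rule card_le1_of[OF finJ])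
          fix t1 t2 assume h: "t1 \<in> S \<inter> J k" "t2 \<in> S \<inter> J k" "t1 < t2"
          show False using core_sep[of n \<delta> t1 t2 k] n nd' h inJ Sprop core by auto
        qed
        have "(\<Sum>t\<in>S \<inter> J k. real (wt n t)) = (\<Sum>t\<in>S \<inter> J k. 1)" using w1 by (intro sum.cong) auto
        also have "\<dots> = real (card (S \<inter> J k))" by simp
        also have "\<dots> \<le> 1" using \<open>card (S \<inter> J k) \<le> 1\<close> by simp
        finally show ?thesis using \<open>A k\<close> False by simp
      qed
    qed
  qed
  have step2: "(\<Sum>k<n. \<Sum>t\<in>S \<inter> J k. real (wt n t)) \<le> real (card {k. k < n \<and> A k}) + 5 * real (card {k. k < n \<and> B k})"
  proof -
    have "(\<Sum>k<n. \<Sum>t\<in>S \<inter> J k. real (wt n t)) \<le> (\<Sum>k<n. (if A k then 1 else 0) + (if B k then 5 else 0))"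
      by (rule sum_mono) (rule perk)
    also have "\<dots> = (\<Sum>k<n. (if A k then 1 else 0) + 5 * (if B k then (1::real) else 0))"
      by (intro sum.cong refl) simp
    also have "\<dots> = (\<Sum>k<n. (if A k then 1 else 0)) + (\<Sum>k<n. 5 * (if B k then (1::real) else 0))"
      by (rule sum.distrib)
    also have "\<dots> = (\<Sum>k<n. (if A k then 1 else 0)) + 5 * (\<Sum>k<n. (if B k then 1 else 0))"
      by (simp add: sum_distrib_left)
    also have "(\<Sum>k<n. (if A k then 1 else 0)) = real (card {k. k < n \<and> A k})"
      by (simp add: sum.If_cases lessThan_def Collect_conj_eq[symmetric] Int_def)
    also have "(\<Sum>k<n. (if B k then 1 else 0)) = real (card {k. k < n \<and> B k})"
      by (simp add: sum.If_cases lessThan_def Int_def)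
    finally show ?thesis .
  qed
  have pp: "pi > 0" by simp
  have cA: "real (card {k. k < n \<and> A k}) \<le> real n * (pi - 2 * \<beta>) / pi + 2"
  proof -
    have "{k. k < n \<and> A k} \<subseteq> {k::nat. real n * \<beta> / pi - 1 \<le> real k \<and> real k \<le> real n * (pi - \<beta>) / pi}"
    proof
      fix k assume "k \<in> {k. k < n \<and> A k}"
      then have "\<beta> * real n \<le> (real k + 1) * pi" "real k * pi \<le> (pi - \<beta>) * real n" by (auto simp: A_def)
      then show "k \<in> {k::nat. real n * \<beta> / pi - 1 \<le> real k \<and> real k \<le> real n * (pi - \<beta>) / pi}"
        using pp by (auto simp: field_simps)
    qed
    then have "card {k. k < n \<and> A k} \<le> card {k::nat. real n * \<beta> / pi - 1 \<le> real k \<and> real k \<le> real n * (pi - \<beta>) / pi}"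
      by (intro card_mono finite_nat_interval)
    then have "real (card {k. k < n \<and> A k}) \<le> max 0 (real n * (pi - \<beta>) / pi - (real n * \<beta> / pi - 1) + 1)"
      using card_nat_interval[of "real n * \<beta> / pi - 1" "real n * (pi - \<beta>) / pi"] by linarith
    also have "\<dots> = real n * (pi - 2 * \<beta>) / pi + 2"
    proof -
      have "real n * (pi - 2 * \<beta>) / pi \<ge> 0" using b np by simp
      moreover have "real n * (pi - \<beta>) / pi - (real n * \<beta> / pi - 1) + 1 = real n * (pi - 2 * \<beta>) / pi + 2"
        by (simp add: field_simps)
      ultimately show ?thesis by simp
    qed
    finally show ?thesis .
  qed
  have cB: "real (card {k. k < n \<and> B k}) \<le> 2 * (real n * \<epsilon> / pi + 2)"
  proof -
    define L where "L = {k::nat. real n * \<beta> / pi - 1 \<le> real k \<and> real k \<le> real n * (\<beta> + \<epsilon>) / pi}"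
    define R where "R = {k::nat. real n * (pi - \<beta> - \<epsilon>) / pi - 1 \<le> real k \<and> real k \<le> real n * (pi - \<beta>) / pi}"
    have finL: "finite L" unfolding L_def by (rule finite_nat_interval)
    have finR: "finite R" unfolding R_def by (rule finite_nat_interval)
    have "{k. k < n \<and> B k} \<subseteq> L \<union> R"
    proof
      fix k assume "k \<in> {k. k < n \<and> B k}"
      then have h: "\<beta> * real n \<le> (real k + 1) * pi" "real k * pi \<le> (pi - \<beta>) * real n"
        "real k * pi < (\<beta> + \<epsilon>) * real n \<or> (real k + 1) * pi > (pi - \<beta> - \<epsilon>) * real n"
        by (auto simp: B_def A_def)
      then show "k \<in> L \<union> R" using pp by (auto simp: L_def R_def field_simps)
    qed
    then have "card {k. k < n \<and> B k} \<le> card (L \<union> R)" by (intro card_mono) (use finL finR in auto)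
    also have "\<dots> \<le> card L + card R" by (rule card_Un_le)
    finally have "real (card {k. k < n \<and> B k}) \<le> real (card L) + real (card R)" by linarith
    moreover have "real (card L) \<le> real n * \<epsilon> / pi + 2"
    proof -
      have "real (card L) \<le> max 0 (real n * (\<beta> + \<epsilon>) / pi - (real n * \<beta> / pi - 1) + 1)"
        unfolding L_def by (rule card_nat_interval)
      also have "\<dots> = real n * \<epsilon> / pi + 2"
      proof -
        have "real n * \<epsilon> / pi \<ge> 0" using e np by simp
        moreover have "real n * (\<beta> + \<epsilon>) / pi - (real n * \<beta> / pi - 1) + 1 = real n * \<epsilon> / pi + 2" by (simp add: field_simps)
        ultimately show ?thesis by simp
      qed
      finally show ?thesis .
    qed
    moreover have "real (card R) \<le> real n * \<epsilon> / pi + 2"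
    proof -
      have "real (card R) \<le> max 0 (real n * (pi - \<beta>) / pi - (real n * (pi - \<beta> - \<epsilon>) / pi - 1) + 1)"
        unfolding R_def by (rule card_nat_interval)
      also have "\<dots> = real n * \<epsilon> / pi + 2"
      proof -
        have "real n * \<epsilon> / pi \<ge> 0" using e np by simp
        moreover have "real n * (pi - \<beta>) / pi - (real n * (pi - \<beta> - \<epsilon>) / pi - 1) + 1 = real n * \<epsilon> / pi + 2" by (simp add: field_simps)
        ultimately show ?thesis by simp
      qed
      finally show ?thesis .
    qed
    ultimately have "real (card {k. k < n \<and> B k}) \<le> (real n * \<epsilon> / pi + 2) + (real n * \<epsilon> / pi + 2)" by linarith
    then show ?thesis by (metis mult_2)
  qed
  show ?thesis using step1 step2 cA cB by (simp add: S_def \<beta>_def)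
qed



theorem mainTheorem6:
  fixes \<alpha> :: real
  assumes "4 * \<alpha>^3 - 2 * \<alpha> = 1"
  shows "(\<lambda>n. C_ratio (P2n n)) \<longlonglongrightarrow> (2 / pi) * arccos \<alpha>"
proof (rule LIMSEQ_I)
  note a = assms
  fix e :: real assume e: "0 < e"
  define \<beta> where "\<beta> = arccos \<alpha>"
  have b: "0 < \<beta>" "\<beta> < pi/2" using beta_facts[OF a] \<beta>_def by auto
  define L' where "L' = (pi - 2 * \<beta>) / pi"
  define \<epsilon> where "\<epsilon> = min (e * pi / 20) (pi / 4)"
  have ep: "0 < \<epsilon>" "\<epsilon> \<le> pi/4" "\<epsilon> \<le> e * pi / 20" using e by (auto simp: \<epsilon>_def)
  define \<delta> where "\<delta> = min ((\<alpha> - cos (arccos \<alpha> + \<epsilon>)) * (3*\<alpha>^2 - 2)) 1"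
  have dp: "\<delta> > 0" using delta_pos[OF a ep(1,2)] by (simp add: \<delta>_def)
  define N where "N = nat \<lceil>17 / \<delta> + 44 / e\<rceil> + 6"
  show "\<exists>no. \<forall>n\<ge>no. norm (C_ratio (P2n n) - (2 / pi) * arccos \<alpha>) < e"
  proof (intro exI allI impI)
    fix n assume nN: "N \<le> n"
    have "real N \<ge> 17 / \<delta> + 44 / e + 6" unfolding N_def using le_of_int_ceiling[of "17 / \<delta> + 44 / e"]
      by (simp add: of_nat_nat) linarith
    then have nb: "real n \<ge> 17 / \<delta> + 44 / e + 6" using nN by (meson of_nat_le_iff order_trans)
    have pos1: "17 / \<delta> > 0" "44 / e > 0" using dp e by auto
    have n6: "n \<ge> 6" using nb pos1 by linarith
    have n4: "n \<ge> 4" using n6 by simp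
    have np: "real n > 0" using n6 by simp
    have "17 / \<delta> \<le> real n" using nb pos1 by linarith
    then have "real n * \<delta> \<ge> 17" using dp by (simp add: pos_divide_le_eq)
    then have "(real n)^2 * \<delta> \<ge> real n * 17" using np by (simp add: power2_eq_square mult.assoc mult_left_mono)
    then have nd: "(real n)^2 * \<delta> > 16" using n6 by linarith
    have "44 / e < real n" using nb pos1 by linarith
    then have ne: "real n * e > 44" using e by (simp add: pos_divide_less_eq)
    define U where "U = real (Ucount n)"
    have lc: "real (card (Sset n)) \<ge> real n * L' - 2" using lower_count[OF a n4] by (simp add: L'_def \<beta>_def mult_divide_mult_cancel_left)
    have uc: "(\<Sum>t\<in>Sset n. real (wt n t)) \<le> real n * L' + 2 + 10 * (real n * \<epsilon> / pi + 2)"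
      using upper_count[OF a ep(1,2) n6] nd by (simp add: \<delta>_def L'_def \<beta>_def)
    have U1: "U \<ge> 2 * real (card (Sset n))" using U_bounds(1)[OF n6] unfolding U_def by linarith
    have "real (Ucount n) \<le> real (2 * (\<Sum>t\<in>Sset n. wt n t))" using U_bounds(2)[OF n6] by linarith
    then have U2: "U \<le> 2 * (\<Sum>t\<in>Sset n. real (wt n t))" by (simp add: U_def)
    have dev: "\<bar>2 * (real n * L') - U\<bar> \<le> 44 + 20 * (real n * \<epsilon> / pi)"
    proof -
      have X0: "real n * \<epsilon> / pi \<ge> 0" using np ep by simp
      define X where "X = real n * \<epsilon> / pi"
      define Y where "Y = real n * L'"
      define W where "W = (\<Sum>t\<in>Sset n. real (wt n t))"
      define c where "c = real (card (Sset n))"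
      have h: "0 \<le> X" "2 * c \<le> U" "U \<le> 2 * W" "Y - 2 \<le> c" "W \<le> Y + 2 + 10 * (X + 2)"
        using X0 U1 U2 lc uc unfolding X_def Y_def W_def c_def by auto
      have "\<bar>2 * Y - U\<bar> \<le> 44 + 20 * X" using h by (simp add: abs_le_iff)
      then show ?thesis unfolding X_def Y_def .
    qed
    have Ceq: "C_ratio (P2n n) - (2 / pi) * arccos \<alpha> = (2 * (real n * L') - U) / (2 * real n)"
      using np by (simp add: C_ratio_U[OF n4] U_def L'_def \<beta>_def field_simps)
    have "\<bar>(2 * (real n * L') - U) / (2 * real n)\<bar> = \<bar>2 * (real n * L') - U\<bar> / (2 * real n)" using np by simp
    also have "\<dots> \<le> (44 + 20 * (real n * \<epsilon> / pi)) / (2 * real n)" using np dev by (intro divide_right_mono) auto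
    also have "\<dots> = 22 / real n + 10 * \<epsilon> / pi" using np by (simp add: field_simps)
    also have "\<dots> < e"
    proof -
      have "22 / real n < e / 2" using np ne by (simp add: field_simps)
      moreover have "10 * \<epsilon> / pi \<le> e / 2" using ep(3) by (simp add: field_simps)
      ultimately show ?thesis by linarith
    qed
    finally show "norm (C_ratio (P2n n) - (2 / pi) * arccos \<alpha>) < e" using Ceq by simp
  qed
qed


end
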